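(* Let $\mu\ge 2$ be an integer. For a prime $p$ and integer $r\ge 1$ set $$\mathrm{weight}(p,r)=\log_2 I_{1/p}(r-1,\mu)-\log_2 I_{1/p}(r,\mu),\qquad \mathrm{density}(p,r)=\frac{\log_2 p}{\mathrm{weight}(p,r)}.$$ Then for every fixed prime $p$, $\mathrm{density}(p,r)$ is decreasing in $r\ge 1$, and $\mathrm{density}(p,1)=\dfrac{\ln p}{-\ln\big(1-(1-1/p)^\mu\big)}$ is non-increasing as a function of the prime $p$.
   Context: For $\epsilon\in(0,1)$ and integers $k\ge 0$, $\mu\ge 1$, the regularized (incomplete) beta function is $I_\epsilon(k,\mu)=(1-\epsilon)^\mu\sum_{j=k}^{\infty}\binom{\mu+j-1}{j}\epsilon^j$; in particular $I_\epsilon(0,\mu)=1$ and $I_\epsilon(1,\mu)=1-(1-\epsilon)^\mu$. *)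

theory Defs
  imports Complex_Main "HOL-Computational_Algebra.Primes"
begin

text \<open>Regularized incomplete beta function (negative-binomial tail form):
  I_eps(k,mu) = (1-eps)^mu * sum_{j>=k} binom(mu+j-1, j) eps^j.\<close>
definition incBeta :: "real \<Rightarrow> nat \<Rightarrow> nat \<Rightarrow> real" where
  "incBeta \<epsilon> k \<mu> = (1 - \<epsilon>) ^ \<mu> * (\<Sum>i. real ((\<mu> + (i + k) - 1) choose (i + k)) * \<epsilon> ^ (i + k))"

definition weight :: "nat \<Rightarrow> nat \<Rightarrow> nat \<Rightarrow> real" where
  "weight \<mu> p r = log 2 (incBeta (1 / real p) (r - 1) \<mu>) - log 2 (incBeta (1 / real p) r \<mu>)"

definition density :: "nat \<Rightarrow> nat \<Rightarrow> nat \<Rightarrow> real" where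
  "density \<mu> p r = log 2 (real p) / weight \<mu> p r"

end

theory Submission
  imports Defs "HOL-Analysis.Generalised_Binomial_Theorem" "HOL-Analysis.Convex"
begin

definition aa :: "nat \<Rightarrow> real \<Rightarrow> nat \<Rightarrow> real" where
  "aa \<mu> e j = real ((\<mu> + j - 1) choose j) * e ^ j"

definition TT :: "nat \<Rightarrow> real \<Rightarrow> nat \<Rightarrow> real" where
  "TT \<mu> e k = (\<Sum>i. aa \<mu> e (i + k))"

lemma incBeta_TT: "incBeta e k \<mu> = (1 - e)^\<mu> * TT \<mu> e k"
  by (simp add: incBeta_def TT_def aa_def)

lemma aa_sums:
  assumes "\<mu> \<ge> 1" "0 < e" "e < 1"
  shows "aa \<mu> e sums (1 / (1 - e)^\<mu>)"
proof -
  have "(\<lambda>n. (- real \<mu> gchoose n) * (-e)^n) sums (1 + - e) powr (- real \<mu>)"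
    by (rule gen_binomial_real) (use assms in auto)
  moreover have "(- real \<mu> gchoose n) * (-e)^n = aa \<mu> e n" for n
  proof -
    have "real ((\<mu> + n - 1) choose n) = (real \<mu> + real n - 1) gchoose n"
      using assms(1) by (simp add: binomial_gbinomial of_nat_diff)
    moreover have "((-1::real)^n * (-1)^n) = 1"
      by (simp add: power_mult_distrib[symmetric])
    moreover have "(- real \<mu> gchoose n) = (-1)^n * ((real \<mu> + real n - 1) gchoose n)"
      by (rule gbinomial_minus)
    moreover have "(-e)^n = (-1)^n * e^n" by (rule power_minus)
    ultimately show ?thesis
    proof -
      assume G: "real ((\<mu> + n - 1) choose n) = (real \<mu> + real n - 1) gchoose n"
        and M: "((-1::real)^n * (-1)^n) = 1"
        and B: "(- real \<mu> gchoose n) = (-1)^n * ((real \<mu> + real n - 1) gchoose n)"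
        and C: "(-e)^n = (-1)^n * e^n"
      define g where "g = (real \<mu> + real n - 1) gchoose n"
      define s where "s = ((-1::real)^n)"
      have "(- real \<mu> gchoose n) * (-e)^n = s * g * (s * e^n)"
        unfolding B C g_def s_def by (rule refl)
      also have "\<dots> = (s * s) * (g * e^n)" by (simp only: ac_simps)
      also have "\<dots> = g * e^n" using M unfolding s_def by simp
      finally show ?thesis unfolding aa_def G g_def .
    qed
  qed
  moreover have "(1 + - e) powr (- real \<mu>) = 1 / (1-e)^\<mu>"
    using assms by (simp add: powr_minus powr_realpow divide_inverse)
  ultimately show ?thesis by simp
qed

lemma aa_Suc:
  assumes "\<mu> \<ge> 1"
  shows "aa \<mu> e (Suc j) * (j + 1) = aa \<mu> e j * (\<mu> + j) * e"
proof -
  have 1: "Suc j * (Suc (\<mu> + j - 1) choose Suc j) = Suc (\<mu> + j - 1) * ((\<mu> + j - 1) choose j)"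
    by (rule Suc_times_binomial)
  have 2: "Suc (\<mu> + j - 1) = \<mu> + Suc j - 1" "Suc (\<mu> + j - 1) = \<mu> + j" using assms by auto
  have "real (Suc j) * real ((\<mu> + Suc j - 1) choose Suc j) = real (\<mu>+j) * real ((\<mu> + j - 1) choose j)"
    using arg_cong[OF 1, of real] unfolding 2 of_nat_mult by simp
  then show ?thesis unfolding aa_def by (simp add: algebra_simps)
qed

lemma aa_pos:
  assumes "\<mu> \<ge> 1" "e > 0"
  shows "aa \<mu> e j > 0"
  using assms unfolding aa_def by (simp add: zero_less_binomial_iff)

lemma aa_strict:
  assumes "\<mu> \<ge> 2" "e > 0" "n < m"
  shows "aa \<mu> e (Suc m) * aa \<mu> e n < aa \<mu> e m * aa \<mu> e (Suc n)"
proof -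
  have m1: "aa \<mu> e (Suc m) = aa \<mu> e m * (\<mu> + m) * e / (m + 1)"
    using aa_Suc[of \<mu> e m] assms by (simp add: field_simps)
  have n1: "aa \<mu> e (Suc n) = aa \<mu> e n * (\<mu> + n) * e / (n + 1)"
    using aa_Suc[of \<mu> e n] assms by (simp add: field_simps)
  have A: "aa \<mu> e m > 0" "aa \<mu> e n > 0" using aa_pos assms by auto
  have "(real \<mu> - 1) * real n < (real \<mu> - 1) * real m"
    using assms by (intro mult_strict_left_mono) auto
  then have "(real \<mu> + m) * (n + 1) < (real \<mu> + n) * (m + 1)"
    by (simp add: algebra_simps)
  then have r: "(real \<mu> + m) / (m + 1) < (real \<mu> + n) / (n + 1)"
    by (simp add: field_simps)
  have "aa \<mu> e (Suc m) * aa \<mu> e n = (aa \<mu> e m * aa \<mu> e n * e) * ((real \<mu> + m) / (m + 1))"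
    by (simp add: m1)
  also have "\<dots> < (aa \<mu> e m * aa \<mu> e n * e) * ((real \<mu> + n) / (n + 1))"
    using A assms r by (intro mult_strict_left_mono) auto
  also have "\<dots> = aa \<mu> e m * aa \<mu> e (Suc n)" by (simp add: n1)
  finally show ?thesis .
qed


lemma aa_summable:
  assumes "\<mu> \<ge> 1" "0 < e" "e < 1"
  shows "summable (\<lambda>i. aa \<mu> e (i + k))"
  using aa_sums[OF assms] summable_iff_shift[of "aa \<mu> e" k] sums_summable by blast

lemma TT_split:
  assumes "\<mu> \<ge> 1" "0 < e" "e < 1"
  shows "TT \<mu> e k = aa \<mu> e k + TT \<mu> e (Suc k)"
proof -
  have "(\<Sum>i. aa \<mu> e (Suc i + k)) = TT \<mu> e k - aa \<mu> e (0 + k)"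
    unfolding TT_def by (rule suminf_split_head[OF aa_summable[OF assms]])
  then show ?thesis unfolding TT_def by simp
qed

lemma TT_pos:
  assumes "\<mu> \<ge> 1" "0 < e" "e < 1"
  shows "TT \<mu> e k > 0"
  unfolding TT_def by (rule suminf_pos[OF aa_summable[OF assms]]) (use aa_pos assms in auto)

lemma TT0:
  assumes "\<mu> \<ge> 1" "0 < e" "e < 1"
  shows "TT \<mu> e 0 = 1 / (1 - e)^\<mu>"
  unfolding TT_def using aa_sums[OF assms] by (simp add: sums_iff)

lemma TT_key:
  assumes "\<mu> \<ge> 2" "0 < e" "e < 1"
  shows "aa \<mu> e n * TT \<mu> e (n+2) < aa \<mu> e (Suc n) * TT \<mu> e (Suc n)"
proof -
  have m1: "\<mu> \<ge> 1" using assms by simp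
  note S = aa_summable[OF m1 assms(2,3)]
  have s1: "summable (\<lambda>i. aa \<mu> e n * aa \<mu> e (i + (n+2)))"
    by (rule summable_mult[OF S])
  have s2: "summable (\<lambda>i. aa \<mu> e (Suc n) * aa \<mu> e (i + Suc n))"
    by (rule summable_mult[OF S])
  have e1: "aa \<mu> e n * TT \<mu> e (n+2) = (\<Sum>i. aa \<mu> e n * aa \<mu> e (i + (n+2)))"
    unfolding TT_def by (rule suminf_mult[OF S, symmetric])
  have e2: "aa \<mu> e (Suc n) * TT \<mu> e (Suc n) = (\<Sum>i. aa \<mu> e (Suc n) * aa \<mu> e (i + Suc n))"
    unfolding TT_def by (rule suminf_mult[OF S, symmetric])
  have "0 < (\<Sum>i. aa \<mu> e (Suc n) * aa \<mu> e (i + Suc n) - aa \<mu> e n * aa \<mu> e (i + (n+2)))"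
  proof (rule suminf_pos)
    show "summable (\<lambda>i. aa \<mu> e (Suc n) * aa \<mu> e (i + Suc n) - aa \<mu> e n * aa \<mu> e (i + (n+2)))"
      by (rule summable_diff[OF s2 s1])
    fix i
    have "aa \<mu> e (Suc (i + Suc n)) * aa \<mu> e n < aa \<mu> e (i + Suc n) * aa \<mu> e (Suc n)"
      by (rule aa_strict) (use assms in auto)
    moreover have "Suc (i + Suc n) = i + (n+2)" by simp
    ultimately show "0 < aa \<mu> e (Suc n) * aa \<mu> e (i + Suc n) - aa \<mu> e n * aa \<mu> e (i + (n+2))"
      by (simp add: mult.commute)
  qed
  also have "\<dots> = aa \<mu> e (Suc n) * TT \<mu> e (Suc n) - aa \<mu> e n * TT \<mu> e (n+2)"
    unfolding e1 e2 by (rule suminf_diff[OF s2 s1, symmetric])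
  finally show ?thesis by simp
qed

lemma TT_logconc:
  assumes "\<mu> \<ge> 2" "0 < e" "e < 1"
  shows "TT \<mu> e n * TT \<mu> e (n+2) < TT \<mu> e (Suc n) ^ 2"
proof -
  have m1: "\<mu> \<ge> 1" using assms by simp
  have a: "TT \<mu> e n = aa \<mu> e n + TT \<mu> e (Suc n)" by (rule TT_split[OF m1 assms(2,3)])
  have b: "TT \<mu> e (Suc n) = aa \<mu> e (Suc n) + TT \<mu> e (n+2)"
    using TT_split[OF m1 assms(2,3), of "Suc n"] by simp
  have k: "aa \<mu> e n * TT \<mu> e (n+2) < aa \<mu> e (Suc n) * TT \<mu> e (Suc n)" by (rule TT_key[OF assms])
  have "TT \<mu> e n * TT \<mu> e (n+2) = aa \<mu> e n * TT \<mu> e (n+2) + TT \<mu> e (Suc n) * TT \<mu> e (n+2)"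
    unfolding a by (simp add: algebra_simps)
  also have "\<dots> < aa \<mu> e (Suc n) * TT \<mu> e (Suc n) + TT \<mu> e (Suc n) * TT \<mu> e (n+2)"
    using k by simp
  also have "\<dots> = TT \<mu> e (Suc n) * (aa \<mu> e (Suc n) + TT \<mu> e (n+2))"
    by (simp add: algebra_simps)
  also have "\<dots> = TT \<mu> e (Suc n) ^ 2"
    using b by (simp add: power2_eq_square)
  finally show ?thesis .
qed



definition phi :: "nat \<Rightarrow> real \<Rightarrow> real" where
  "phi \<mu> t = - ln (1 - (1 - exp (- t)) ^ \<mu>)"

definition hh :: "nat \<Rightarrow> real \<Rightarrow> real" where
  "hh \<mu> v = real \<mu> * v ^ (\<mu> - 1) / (\<Sum>k<\<mu>. v ^ k)"

lemma S_pos: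
  fixes v :: real
  assumes "\<mu> \<ge> 1" "0 \<le> v"
  shows "(\<Sum>k<\<mu>. v ^ k) \<ge> 1"
proof -
  have "(\<Sum>k<\<mu>. v ^ k) = v ^ 0 + (\<Sum>k\<in>{..<\<mu>}-{0}. v ^ k)"
    by (rule sum.remove) (use assms in auto)
  moreover have "(\<Sum>k\<in>{..<\<mu>}-{0}. v ^ k) \<ge> 0" using assms by (simp add: sum_nonneg)
  ultimately show ?thesis by simp
qed

lemma hh_mono:
  assumes "\<mu> \<ge> 1" "0 \<le> v1" "v1 \<le> v2"
  shows "hh \<mu> v1 \<le> hh \<mu> v2"
proof -
  have S1: "(\<Sum>k<\<mu>. v1 ^ k) > 0" "(\<Sum>k<\<mu>. v2 ^ k) > 0"
    using S_pos[of \<mu> v1] S_pos[of \<mu> v2] assms by auto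
  have "v1 ^ (\<mu> - 1) * (\<Sum>k<\<mu>. v2 ^ k) \<le> v2 ^ (\<mu> - 1) * (\<Sum>k<\<mu>. v1 ^ k)"
    unfolding sum_distrib_left
  proof (rule sum_mono)
    fix k assume "k \<in> {..<\<mu>}"
    then have k: "\<mu> - 1 = k + (\<mu> - 1 - k)" by auto
    have "v1 ^ (\<mu> - 1) * v2 ^ k = (v1 ^ k * v2 ^ k) * v1 ^ (\<mu> - 1 - k)"
      by (subst k) (simp add: power_add)
    also have "\<dots> \<le> (v1 ^ k * v2 ^ k) * v2 ^ (\<mu> - 1 - k)"
      using assms by (intro mult_left_mono power_mono) auto
    also have "\<dots> = v2 ^ (\<mu> - 1) * v1 ^ k"
      by (subst k) (simp add: power_add)
    finally show "v1 ^ (\<mu> - 1) * v2 ^ k \<le> v2 ^ (\<mu> - 1) * v1 ^ k" .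
  qed
  then have "real \<mu> * v1 ^ (\<mu> - 1) * (\<Sum>k<\<mu>. v2 ^ k) \<le> real \<mu> * v2 ^ (\<mu> - 1) * (\<Sum>k<\<mu>. v1 ^ k)"
    by (simp add: mult.assoc mult_left_mono)
  then show ?thesis unfolding hh_def using S1 by (simp add: divide_simps)
qed

lemma phi_deriv:
  assumes "\<mu> \<ge> 2" "t \<ge> 0"
  shows "(phi \<mu> has_real_derivative hh \<mu> (1 - exp (- t))) (at t)"
proof -
  define v where "v = 1 - exp (- t)"
  have v: "0 \<le> v" "v < 1" using assms unfolding v_def by auto
  have vm: "v ^ \<mu> < 1" using v assms by (simp add: power_less_one_iff)
  have "(phi \<mu> has_real_derivative
      - (- (real \<mu> * (1 - exp (- t)) ^ (\<mu> - 1) * (- (exp (- t) * (- 1))))) / (1 - (1 - exp (- t)) ^ \<mu>)) (at t)"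
    unfolding phi_def
    by (rule derivative_eq_intros refl | use vm v_def in simp)+
  moreover have "- (- (real \<mu> * (1 - exp (- t)) ^ (\<mu> - 1) * (- (exp (- t) * (- 1))))) / (1 - (1 - exp (- t)) ^ \<mu>)
      = hh \<mu> (1 - exp (- t))"
  proof -
    have e: "exp (- t) = 1 - v" unfolding v_def by simp
    have "1 - v ^ \<mu> = (1 - v) * (\<Sum>k<\<mu>. v ^ k)" by (rule one_diff_power_eq)
    moreover have "1 - v \<noteq> 0" using v by simp
    ultimately show ?thesis unfolding e v_def[symmetric] hh_def by (simp add: divide_simps)
  qed
  ultimately show ?thesis by simp
qed

lemma phi_convex:
  assumes "\<mu> \<ge> 2"
  shows "convex_on {0..} (phi \<mu>)"
proof (rule convex_on_realI)
  show "connected {0::real..}" by simp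
  show "\<And>x. x \<in> {0..} \<Longrightarrow> (phi \<mu> has_real_derivative hh \<mu> (1 - exp (- x))) (at x)"
    using phi_deriv assms by auto
  fix x y :: real assume "x \<in> {0..}" "y \<in> {0..}" "x \<le> y"
  then show "hh \<mu> (1 - exp (- x)) \<le> hh \<mu> (1 - exp (- y))"
    using assms by (intro hh_mono) auto
qed

lemma phi_pos:
  assumes "\<mu> \<ge> 1" "t > 0"
  shows "phi \<mu> t > 0"
proof -
  have v: "0 < 1 - exp (- t)" "1 - exp (- t) < 1" using assms by auto
  then have "(1 - exp (- t)) ^ \<mu> < 1" "(1 - exp (- t)) ^ \<mu> > 0"
    using assms by (simp_all add: power_less_one_iff)
  then show ?thesis unfolding phi_def by simp
qed

lemma phi_ratio:
  assumes "\<mu> \<ge> 2" "0 < s" "s \<le> t"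
  shows "t / phi \<mu> t \<le> s / phi \<mu> s"
proof -
  have c: "convex_on {0..} (phi \<mu>)" by (rule phi_convex[OF assms(1)])
  have "phi \<mu> ((1 - s/t) *\<^sub>R 0 + (s/t) *\<^sub>R t) \<le> (1 - s/t) * phi \<mu> 0 + (s/t) * phi \<mu> t"
    by (rule convex_onD[OF c]) (use assms in auto)
  moreover have "phi \<mu> 0 = 0" unfolding phi_def using assms by (simp add: power_0_left)
  moreover have "(1 - s/t) *\<^sub>R 0 + (s/t) *\<^sub>R t = s" using assms by simp
  ultimately have "phi \<mu> s \<le> (s/t) * phi \<mu> t" by simp
  then have "t * phi \<mu> s \<le> s * phi \<mu> t" using assms by (simp add: field_simps)
  moreover have "phi \<mu> s > 0" "phi \<mu> t > 0" using phi_pos assms by auto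
  ultimately show ?thesis using assms by (simp add: divide_simps mult.commute)
qed


lemma weight_eq:
  assumes "\<mu> \<ge> 1" "0 < 1 / real p" "1 / real p < 1"
  shows "weight \<mu> p r = (ln (TT \<mu> (1 / real p) (r - 1)) - ln (TT \<mu> (1 / real p) r)) / ln 2"
proof -
  define e where "e = 1 / real p"
  have e: "0 < e" "e < 1" using assms unfolding e_def by auto
  have q: "(1 - e) ^ \<mu> > 0" using e by simp
  have T: "TT \<mu> e k > 0" for k using TT_pos[OF assms(1) e] .
  have "weight \<mu> p r = (ln ((1 - e) ^ \<mu>) + ln (TT \<mu> e (r - 1))) / ln 2 - (ln ((1 - e) ^ \<mu>) + ln (TT \<mu> e r)) / ln 2"
    unfolding weight_def incBeta_TT log_def e_def[symmetric] ln_mult_pos[OF q T] by (simp add: diff_divide_distrib)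
  also have "\<dots> = (ln (TT \<mu> e (r - 1)) - ln (TT \<mu> e r)) / ln 2"
    by (simp add: field_simps)
  finally show ?thesis unfolding e_def .
qed

lemma prime_e:
  assumes "prime (p::nat)"
  shows "0 < 1 / real p" "1 / real p < 1"
proof -
  have "p \<ge> 2" using prime_ge_2_nat[OF assms] .
  then show "0 < 1 / real p" "1 / real p < 1" by auto
qed

lemma weight_pos:
  assumes "\<mu> \<ge> 1" "prime p" "n \<ge> 1"
  shows "weight \<mu> p n > 0"
proof -
  define e where "e = 1 / real p"
  have e: "0 < e" "e < 1" using prime_e[OF assms(2)] unfolding e_def by auto
  have "TT \<mu> e (n - 1) = aa \<mu> e (n - 1) + TT \<mu> e n"
    using TT_split[OF assms(1) e, of "n - 1"] assms(3) by simp
  then have "TT \<mu> e (n - 1) > TT \<mu> e n" using aa_pos[OF assms(1) e(1)] by simp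
  then have "ln (TT \<mu> e (n - 1)) > ln (TT \<mu> e n)" using TT_pos[OF assms(1) e] by simp
  then show ?thesis using weight_eq[OF assms(1) prime_e[OF assms(2)], of n] unfolding e_def by simp
qed

lemma weight_step:
  assumes "\<mu> \<ge> 2" "prime p" "n \<ge> 1"
  shows "weight \<mu> p n < weight \<mu> p (Suc n)"
proof -
  define e where "e = 1 / real p"
  have m1: "\<mu> \<ge> 1" using assms by simp
  have e: "0 < e" "e < 1" using prime_e[OF assms(2)] unfolding e_def by auto
  have T: "TT \<mu> e k > 0" for k using TT_pos[OF m1 e] .
  have "TT \<mu> e (n - 1) * TT \<mu> e (n - 1 + 2) < TT \<mu> e (Suc (n - 1)) ^ 2"
    by (rule TT_logconc[OF assms(1) e])
  moreover have "n - 1 + 2 = Suc n" "Suc (n - 1) = n" using assms by auto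
  ultimately have "TT \<mu> e (n - 1) * TT \<mu> e (Suc n) < TT \<mu> e n * TT \<mu> e n"
    by (simp add: power2_eq_square)
  then have "ln (TT \<mu> e (n - 1) * TT \<mu> e (Suc n)) < ln (TT \<mu> e n * TT \<mu> e n)"
    using T by (simp add: mult_pos_pos)
  then have "ln (TT \<mu> e (n - 1)) + ln (TT \<mu> e (Suc n)) < ln (TT \<mu> e n) + ln (TT \<mu> e n)"
    unfolding ln_mult_pos[OF T T] .
  then have "(ln (TT \<mu> e (n - 1)) - ln (TT \<mu> e n)) / ln 2 < (ln (TT \<mu> e (Suc n - 1)) - ln (TT \<mu> e (Suc n))) / ln 2"
    by (simp add: divide_strict_right_mono)
  then show ?thesis
    using weight_eq[OF m1 prime_e[OF assms(2)], of n] weight_eq[OF m1 prime_e[OF assms(2)], of "Suc n"]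
    unfolding e_def by simp
qed

lemma weight_mono:
  fixes p :: nat
  assumes "\<mu> \<ge> 2" "prime p" "1 \<le> r" "r < r'"
  shows "weight \<mu> p r < weight \<mu> p r'"
proof -
  have "Suc r \<le> r'" using assms by simp
  then show ?thesis
  proof (induction r' rule: dec_induct)
    case base
    then show ?case using weight_step[OF assms(1,2,3)] .
  next
    case (step n)
    then show ?case using weight_step[OF assms(1,2), of n] by simp
  qed
qed

lemma density1:
  assumes "\<mu> \<ge> 2" "prime p"
  shows "density \<mu> p 1 = ln (real p) / - ln (1 - (1 - 1 / real p) ^ \<mu>)"
proof -
  define e where "e = 1 / real p"
  have m1: "\<mu> \<ge> 1" using assms by simp
  have e: "0 < e" "e < 1" using prime_e[OF assms(2)] unfolding e_def by auto
  have q: "(1 - e) ^ \<mu> > 0" using e by simp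
  have T0: "TT \<mu> e 0 = 1 / (1 - e) ^ \<mu>" by (rule TT0[OF m1 e])
  have a0: "aa \<mu> e 0 = 1" unfolding aa_def by simp
  have T1: "TT \<mu> e 1 = 1 / (1 - e) ^ \<mu> - 1" using TT_split[OF m1 e, of 0] T0 a0 by simp
  have I0: "incBeta e 0 \<mu> = 1" unfolding incBeta_TT T0 using q e by simp
  have I1: "incBeta e 1 \<mu> = 1 - (1 - e) ^ \<mu>" unfolding incBeta_TT T1 using q e by (simp add: field_simps)
  have "weight \<mu> p 1 = - ln (1 - (1 - e) ^ \<mu>) / ln 2"
    unfolding weight_def e_def[symmetric] using I0 I1 by (simp add: log_def)
  then show ?thesis unfolding density_def e_def by (simp add: log_def)
qed

theorem mainTheorem10:
  fixes \<mu> :: nat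
  assumes "\<mu> \<ge> 2"
  shows "(\<forall>p r r'. prime p \<and> 1 \<le> r \<and> r < r' \<longrightarrow> density \<mu> p r' < density \<mu> p r)
       \<and> (\<forall>p. prime p \<longrightarrow> density \<mu> p 1 = ln (real p) / - ln (1 - (1 - 1 / real p) ^ \<mu>))
       \<and> (\<forall>p q. prime p \<and> prime q \<and> p \<le> q \<longrightarrow> density \<mu> q 1 \<le> density \<mu> p 1)"
proof (intro conjI allI impI)
  fix p r r' :: nat assume h: "prime p \<and> 1 \<le> r \<and> r < r'"
  have w: "weight \<mu> p r < weight \<mu> p r'" using weight_mono[OF assms] h by auto
  have wp: "weight \<mu> p r > 0" using weight_pos[of \<mu> p r] assms h by auto
  have lp: "log 2 (real p) > 0" using prime_ge_2_nat[of p] h by simp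
  show "density \<mu> p r' < density \<mu> p r"
    unfolding density_def using w wp lp by (intro divide_strict_left_mono) auto
next
  fix p :: nat assume "prime p"
  then show "density \<mu> p 1 = ln (real p) / - ln (1 - (1 - 1 / real p) ^ \<mu>)"
    using density1[OF assms] by simp
next
  fix p q :: nat assume h: "prime p \<and> prime q \<and> p \<le> q"
  have p2: "p \<ge> 2" "q \<ge> 2" using h prime_ge_2_nat by auto
  have ex: "exp (- ln (real n)) = 1 / real n" if "n \<ge> 2" for n :: nat
    using that by (simp add: exp_minus inverse_eq_divide)
  have dp: "density \<mu> n 1 = ln (real n) / phi \<mu> (ln (real n))" if "prime n" "n \<ge> 2" for n
    unfolding density1[OF assms that(1)] phi_def ex[OF that(2)] by simp
  have "ln (real q) / phi \<mu> (ln (real q)) \<le> ln (real p) / phi \<mu> (ln (real p))"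
    using p2 h by (intro phi_ratio assms) auto
  then show "density \<mu> q 1 \<le> density \<mu> p 1" using dp h p2 by simp
qed

end
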